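(* Let $n\ge1$ and $1\le m\le\lfloor n/2\rfloor$. For every $l\in\{0,1,\dots,m-1\}$, $$\bigl|\{\pi\in\mathfrak{S}_n:{\rm altmaj}(\pi)\equiv l \pmod{2m}\}\bigr|=\bigl|\{\pi\in\mathfrak{S}_n:{\rm altmaj}(\pi)\equiv l+m \pmod{2m}\}\bigr|.$$ Consequently, $1+q^m$ divides $\sum_{\pi\in\mathfrak{S}_n}q^{{\rm altmaj}(\pi)}$ for $1\le m\le \lfloor n/2\rfloor$.
   Context: $\mathfrak{S}_n$ is the set of permutations $\pi=\pi_1\cdots\pi_n$ of $\{1,\dots,n\}$; $\widehat{D}(\pi)=\{2i:\pi_{2i}<\pi_{2i+1}\}\cup\{2i+1:\pi_{2i+1}>\pi_{2i+2}\}$ (indices in $\{1,\dots,n-1\}$) and ${\rm altmaj}(\pi)=\sum_{i\in\widehat{D}(\pi)}i$. *)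

theory Defs
  imports "HOL-Combinatorics.Permutations" "HOL-Computational_Algebra.Polynomial"
begin

text \<open>A permutation pi of {1..n} is a function p with p permutes {1..n}; pi_i = p i.\<close>

definition altdes :: "nat \<Rightarrow> (nat \<Rightarrow> nat) \<Rightarrow> nat set" where
  "altdes n p = {i \<in> {1..<n}. (even i \<and> p i < p (i+1)) \<or> (odd i \<and> p i > p (i+1))}"

definition altmaj :: "nat \<Rightarrow> (nat \<Rightarrow> nat) \<Rightarrow> nat" where
  "altmaj n p = (\<Sum>i\<in>altdes n p. i)"

end

theory Submission
  imports Defs
begin

definition rv :: "nat \<Rightarrow> nat \<Rightarrow> nat" where
  "rv m i = (if 1 \<le> i \<and> i \<le> 2*m then 2*m+1-i else i)"

definition qd :: "(nat \<Rightarrow> nat) \<Rightarrow> nat \<Rightarrow> bool" where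
  "qd p i = ((even i \<and> p i < p (i+1)) \<or> (odd i \<and> p i > p (i+1)))"

lemma rv_rv[simp]: "rv m (rv m i) = i"
  unfolding rv_def by auto

lemma rv_permutes: assumes "2*m \<le> n" shows "rv m permutes {1..n}"
proof (rule bij_imp_permutes)
  show "bij_betw (rv m) {1..n} {1..n}"
    by (rule bij_betw_byWitness[where f'="rv m"]) (use assms in \<open>auto simp: rv_def\<close>)
  show "\<And>x. x \<notin> {1..n} \<Longrightarrow> rv m x = x" using assms by (auto simp: rv_def)
qed

lemma altmaj_sum: "altmaj n p = (\<Sum>i\<in>{1..<n}. if qd p i then i else 0)"
  unfolding altmaj_def altdes_def qd_def
  by (rule sum.inter_filter) simp

lemma gauss_aux0: "(\<Sum>j\<in>{..<2*m}. j) + m = 2*m*(m::nat)"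
proof (induction m)
  case 0 then show ?case by simp
next
  case (Suc m)
  have "{..<2*Suc m} = {..<2*m} \<union> {2*m, 2*m+1}" by auto
  moreover have "(\<Sum>j\<in>{..<2*m} \<union> {2*m, 2*m+1}. j) = (\<Sum>j\<in>{..<2*m}. j) + (2*m + (2*m+1))"
    by (subst sum.union_disjoint) auto
  ultimately show ?case using Suc by (simp add: algebra_simps)
qed

lemma gauss_aux: "(\<Sum>j\<in>{1..<2*m}. j) + m = 2*m*(m::nat)"
proof -
  have "(\<Sum>j\<in>{..<2*m}. j) = (\<Sum>j\<in>{1..<2*m}. j)"
    by (rule sum.mono_neutral_right) auto
  then show ?thesis using gauss_aux0[of m] by simp
qed

lemma key:
  assumes inj: "inj p" and m: "1 \<le> m" and mn: "2*m \<le> n"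
  shows "altmaj n (p \<circ> rv m) mod (2*m) = (altmaj n p + m) mod (2*m)"
proof -
  define g where "g q i = (if qd q i then i else (0::nat))" for q i
  define r where "r = rv m"
  have split: "altmaj n q = (\<Sum>i\<in>{1..<2*m}. g q i) + (\<Sum>i\<in>{2*m..<n}. g q i)" for q
    unfolding altmaj_sum g_def using m mn by (subst sum.atLeastLessThan_concat) auto
  have tailpt: "g (p \<circ> r) i mod (2*m) = g p i mod (2*m)" if "i \<in> {2*m..<n}" for i
  proof (cases "i = 2*m")
    case True then show ?thesis by (simp add: g_def)
  next
    case False
    then have "r i = i" "r (i+1) = i+1" using that by (auto simp: r_def rv_def)
    then show ?thesis by (simp add: g_def qd_def)
  qed
  have tail: "(\<Sum>i\<in>{2*m..<n}. g (p \<circ> r) i) mod (2*m) = (\<Sum>i\<in>{2*m..<n}. g p i) mod (2*m)"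
  proof -
    have "(\<Sum>i\<in>{2*m..<n}. g (p \<circ> r) i) mod (2*m) = (\<Sum>i\<in>{2*m..<n}. g (p \<circ> r) i mod (2*m)) mod (2*m)"
      by (simp only: mod_sum_eq)
    also have "\<dots> = (\<Sum>i\<in>{2*m..<n}. g p i mod (2*m)) mod (2*m)"
      using tailpt by (simp only: cong: sum.cong)
    also have "\<dots> = (\<Sum>i\<in>{2*m..<n}. g p i) mod (2*m)"
      by (simp only: mod_sum_eq)
    finally show ?thesis .
  qed
  have headpt: "qd (p \<circ> r) i = (\<not> qd p (2*m - i))" if "i \<in> {1..<2*m}" for i
  proof -
    define j where "j = 2*m - i"
    have ri: "r i = j + 1" "r (i+1) = j" using that by (auto simp: r_def rv_def j_def)
    have par: "even i = even j" using that unfolding j_def by (auto simp: even_diff_nat)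
    have ne: "p j \<noteq> p (j+1)" using inj by (metis inj_eq n_not_Suc_n Suc_eq_plus1)
    show ?thesis unfolding qd_def j_def[symmetric] using ri par ne by auto
  qed
  define a where "a j = (if qd p j then j else 0)" for j
  define b where "b j = (if \<not> qd p j then 2*m - j else 0)" for j
  define d where "d j = (if \<not> qd p j then 2*m else 0)" for j
  have h1: "(\<Sum>i\<in>{1..<2*m}. g (p \<circ> r) i) = (\<Sum>i\<in>{1..<2*m}. if \<not> qd p (2*m - i) then i else 0)"
    by (rule sum.cong) (auto simp: g_def headpt)
  also have "\<dots> = (\<Sum>j\<in>{1..<2*m}. b j)"
    unfolding b_def
    by (rule sum.reindex_bij_witness[where i="\<lambda>j. 2*m - j" and j="\<lambda>i. 2*m - i"]) auto
  finally have h2: "(\<Sum>i\<in>{1..<2*m}. g (p \<circ> r) i) = (\<Sum>j\<in>{1..<2*m}. b j)" .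
  have pt: "b j + j = a j + d j" if "j \<in> {1..<2*m}" for j
    using that by (auto simp: a_def b_def d_def)
  have "(\<Sum>j\<in>{1..<2*m}. b j) + (\<Sum>j\<in>{1..<2*m}. j) = (\<Sum>j\<in>{1..<2*m}. a j) + (\<Sum>j\<in>{1..<2*m}. d j)"
    using pt by (simp add: sum.distrib[symmetric])
  moreover have "2*m dvd (\<Sum>j\<in>{1..<2*m}. d j)"
    by (rule dvd_sum) (auto simp: d_def)
  then obtain k where k: "(\<Sum>j\<in>{1..<2*m}. d j) = 2*m*k" by blast
  ultimately have eq: "(\<Sum>j\<in>{1..<2*m}. b j) + 2*m*m = (\<Sum>j\<in>{1..<2*m}. a j) + m + 2*m*k"
    using gauss_aux[of m] by linarith
  have ha: "(\<Sum>j\<in>{1..<2*m}. a j) = (\<Sum>i\<in>{1..<2*m}. g p i)"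
    by (simp add: a_def g_def)
  have hm: "(\<Sum>j\<in>{1..<2*m}. b j) mod (2*m) = ((\<Sum>i\<in>{1..<2*m}. g p i) + m) mod (2*m)"
  proof -
    have "(\<Sum>j\<in>{1..<2*m}. b j) mod (2*m) = ((\<Sum>j\<in>{1..<2*m}. b j) + 2*m*m) mod (2*m)" by simp
    also have "\<dots> = ((\<Sum>j\<in>{1..<2*m}. a j) + m + 2*m*k) mod (2*m)" using eq by simp
    also have "\<dots> = ((\<Sum>i\<in>{1..<2*m}. g p i) + m) mod (2*m)" using ha by simp
    finally show ?thesis .
  qed
  show ?thesis
  proof -
    let ?B = "\<Sum>j\<in>{1..<2*m}. b j" and ?A = "\<Sum>i\<in>{1..<2*m}. g p i"
    let ?T' = "\<Sum>i\<in>{2*m..<n}. g (p \<circ> r) i" and ?T = "\<Sum>i\<in>{2*m..<n}. g p i"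
    have "(?B + ?T') mod (2*m) = (?B mod (2*m) + ?T' mod (2*m)) mod (2*m)" by (simp add: mod_add_eq)
    also have "\<dots> = ((?A + m) mod (2*m) + ?T mod (2*m)) mod (2*m)" using hm tail by simp
    also have "\<dots> = (?A + ?T + m) mod (2*m)" by (simp add: mod_add_eq add_ac)
    finally show ?thesis using split[of "p \<circ> r"] split[of p] h2 r_def by simp
  qed
qed

lemma poly_aux:
  fixes y :: "'a::comm_ring_1"
  shows "(1 + y^m) dvd (y^(r + 2*m*t) - y^r)"
proof (induction t)
  case 0 then show ?case by simp
next
  case (Suc t)
  have ex: "r + 2*m*Suc t = 2*m + (r + 2*m*t)" by simp
  have h1: "y^(r + 2*m*Suc t) = y^(2*m) * y^(r + 2*m*t)" by (simp only: ex power_add)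
  have h2: "y^(2*m) = y^m * y^m" by (simp only: mult_2 power_add)
  have e: "y^(r + 2*m*Suc t) - y^r = y^(2*m) * (y^(r + 2*m*t) - y^r) + y^r * ((1 + y^m) * (y^m - 1))"
    unfolding h1 h2 by (simp add: algebra_simps)
  show ?case unfolding e
    by (rule dvd_add[OF dvd_mult[OF Suc.IH] dvd_mult[OF dvd_mult2[OF dvd_refl]]])
qed

theorem theorem4p9:
  fixes n m :: nat
  assumes "n \<ge> 1" and "1 \<le> m" and "m \<le> n div 2"
  shows "(\<forall>l<m. card {p. p permutes {1..n} \<and> altmaj n p mod (2*m) = l}
                 = card {p. p permutes {1..n} \<and> altmaj n p mod (2*m) = l + m})
         \<and> ([:1:] + monom (1::int) m) dvd (\<Sum>p\<in>{p. p permutes {1..n}}. monom 1 (altmaj n p))"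
proof -
  define P where "P = {p. p permutes {1..n}}"
  define \<phi> where "\<phi> p = p \<circ> rv m" for p :: "nat \<Rightarrow> nat"
  define b where "b p = altmaj n p mod (2*m)" for p
  have mn: "2*m \<le> n" using assms by auto
  have phiP: "\<phi> p \<in> P" if "p \<in> P" for p
    using that permutes_compose[OF rv_permutes[OF mn]] by (auto simp: P_def \<phi>_def)
  have phiphi: "\<phi> (\<phi> p) = p" for p by (auto simp: \<phi>_def fun_eq_iff)
  have bphi: "b (\<phi> p) = (b p + m) mod (2*m)" if "p \<in> P" for p
  proof -
    have "inj p" using that by (auto simp: P_def permutes_inj)
    then show ?thesis using key[OF _ assms(2) mn] by (simp add: b_def \<phi>_def mod_add_left_eq)
  qed
  have part1: "card {p. p permutes {1..n} \<and> altmaj n p mod (2*m) = l}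
                 = card {p. p permutes {1..n} \<and> altmaj n p mod (2*m) = l + m}" if l: "l < m" for l
  proof -
    have "bij_betw \<phi> {p\<in>P. b p = l} {p\<in>P. b p = l + m}"
    proof (rule bij_betw_byWitness[where f'=\<phi>])
      show "\<forall>a\<in>{p \<in> P. b p = l}. \<phi> (\<phi> a) = a" "\<forall>a\<in>{p \<in> P. b p = l + m}. \<phi> (\<phi> a) = a"
        using phiphi by auto
      show "\<phi> ` {p \<in> P. b p = l} \<subseteq> {p \<in> P. b p = l + m}"
        using phiP bphi l by auto
      have "(l + m + m) mod (2*m) = l" using l by (simp add: mult_2 add.assoc)
      then show "\<phi> ` {p \<in> P. b p = l + m} \<subseteq> {p \<in> P. b p = l}"
        using phiP bphi by auto
    qed
    then show ?thesis by (auto simp: P_def b_def dest: bij_betw_same_card)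
  qed
  define x :: "int poly" where "x = [:0,1:]"
  have mon: "monom (1::int) k = x^k" for k by (simp add: x_def monom_altdef)
  have one: "[:1:] = (1::int poly)" by (simp add: one_pCons)
  have finP: "finite P" unfolding P_def using finite_permutations by auto
  have d1: "(1 + x^m) dvd (\<Sum>p\<in>P. x^(altmaj n p) - x^(b p))"
  proof (rule dvd_sum)
    fix p
    have eq: "altmaj n p = b p + 2*m*(altmaj n p div (2*m))" by (simp add: b_def)
    show "(1 + x^m) dvd (x^(altmaj n p) - x^(b p))"
      by (subst eq) (rule poly_aux)
  qed
  define L where "L = {p\<in>P. b p < m}"
  define U where "U = {p\<in>P. \<not> b p < m}"
  have bijLU: "bij_betw \<phi> L U"
  proof (rule bij_betw_byWitness[where f'=\<phi>])
    show "\<forall>a\<in>L. \<phi> (\<phi> a) = a" "\<forall>a\<in>U. \<phi> (\<phi> a) = a" using phiphi by auto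
    show "\<phi> ` L \<subseteq> U" using phiP bphi by (auto simp: L_def U_def)
    show "\<phi> ` U \<subseteq> L"
    proof
      fix q assume "q \<in> \<phi> ` U"
      then obtain p where p: "p \<in> U" "q = \<phi> p" by auto
      have lt: "b p < 2*m" "m \<le> b p" using p assms(2) by (auto simp: U_def b_def)
      have e1: "b p + m = (b p - m) + 2*m" using lt by simp
      have "(b p + m) mod (2*m) = (b p - m) mod (2*m)" unfolding e1 by simp
      also have "\<dots> = b p - m" using lt by simp
      finally have "b q = b p - m" using bphi p by (simp add: U_def)
      then show "q \<in> L" using lt p phiP by (auto simp: L_def U_def)
    qed
  qed
  have bL: "b (\<phi> p) = b p + m" if "p \<in> L" for p
    using that bphi by (auto simp: L_def)
  have "(\<Sum>p\<in>P. x^(b p)) = (\<Sum>p\<in>L. x^(b p)) + (\<Sum>p\<in>U. x^(b p))"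
  proof -
    have PLU: "P = L \<union> U" "L \<inter> U = {}" by (auto simp: L_def U_def)
    have "finite L" "finite U" using finP by (auto simp: L_def U_def)
    then show ?thesis unfolding PLU(1) by (rule sum.union_disjoint) (use PLU(2) in auto)
  qed
  also have "(\<Sum>p\<in>U. x^(b p)) = (\<Sum>p\<in>L. x^(b (\<phi> p)))"
    using sum.reindex_bij_betw[OF bijLU, of "\<lambda>p. x^(b p)"] by simp
  also have "\<dots> = (\<Sum>p\<in>L. x^(b p) * x^m)"
    by (rule sum.cong) (auto simp: bL power_add)
  finally have "(\<Sum>p\<in>P. x^(b p)) = (\<Sum>p\<in>L. x^(b p) * (1 + x^m))"
    by (simp add: sum.distrib algebra_simps)
  then have d2: "(1 + x^m) dvd (\<Sum>p\<in>P. x^(b p))"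
    by (simp add: dvd_sum)
  have "(\<Sum>p\<in>P. x^(altmaj n p)) = (\<Sum>p\<in>P. x^(altmaj n p) - x^(b p)) + (\<Sum>p\<in>P. x^(b p))"
    by (simp add: sum_subtractf)
  then have "(1 + x^m) dvd (\<Sum>p\<in>P. x^(altmaj n p))"
    using d1 d2 by simp
  then show ?thesis using part1 by (simp add: one mon P_def)
qed

end
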